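(* Let $n\ge2$, let $K_n$ be the complete graph on $n$ vertices, let $\mathfrak g_n$ be the Kac--Moody algebra over $\mathbb R$ with diagram $K_n$, and let $\mathfrak k_n$ be its maximal compact subalgebra. Then there is a surjective Lie algebra homomorphism $\mathfrak k_n\to\mathfrak{so}_{n+1}(\mathbb R)$.
   Context: The Kac--Moody algebra with diagram $K_n$ has generalized Cartan matrix with $a_{ii}=2$ and $a_{ij}=-1$ for all $i\ne j$; its maximal compact subalgebra is the fixed point algebra of the Cartan--Chevalley involution $e_i\mapsto-f_i$, $f_i\mapsto-e_i$, $h_i\mapsto-h_i$, and by Berman's theorem is the Lie algebra with generators $X_1,\dots,X_n$ and relations $[X_i,[X_i,X_j]]=-X_j$ for all $i\ne j$. *)

theory Defs
  imports "Jordan_Normal_Form.Matrix"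
begin

datatype lie_term = LGen nat | LZero | LAdd lie_term lie_term
  | LSmul real lie_term | LBr lie_term lie_term

fun kc_wf :: "nat \<Rightarrow> lie_term \<Rightarrow> bool" where
  "kc_wf n (LGen i) = (i < n)"
| "kc_wf n LZero = True"
| "kc_wf n (LAdd s t) = (kc_wf n s \<and> kc_wf n t)"
| "kc_wf n (LSmul c s) = kc_wf n s"
| "kc_wf n (LBr s t) = (kc_wf n s \<and> kc_wf n t)"

text \<open>The congruence presenting k_n (Berman): the Lie algebra over the reals
  generated by X_i with relations [X_i,[X_i,X_j]] = -X_j for i \<noteq> j.\<close>
inductive kc_eq :: "nat \<Rightarrow> lie_term \<Rightarrow> lie_term \<Rightarrow> bool" for n where
  refl: "kc_eq n s s"
| sym: "kc_eq n s t \<Longrightarrow> kc_eq n t s"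
| trans: "kc_eq n s t \<Longrightarrow> kc_eq n t u \<Longrightarrow> kc_eq n s u"
| cong_add: "kc_eq n s s' \<Longrightarrow> kc_eq n t t' \<Longrightarrow> kc_eq n (LAdd s t) (LAdd s' t')"
| cong_smul: "kc_eq n s s' \<Longrightarrow> kc_eq n (LSmul c s) (LSmul c s')"
| cong_br: "kc_eq n s s' \<Longrightarrow> kc_eq n t t' \<Longrightarrow> kc_eq n (LBr s t) (LBr s' t')"
| add_assoc: "kc_eq n (LAdd (LAdd s t) u) (LAdd s (LAdd t u))"
| add_comm: "kc_eq n (LAdd s t) (LAdd t s)"
| add_zero: "kc_eq n (LAdd s LZero) s"
| add_inv: "kc_eq n (LAdd s (LSmul (-1) s)) LZero"
| smul_add: "kc_eq n (LSmul c (LAdd s t)) (LAdd (LSmul c s) (LSmul c t))"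
| add_smul: "kc_eq n (LSmul (c + d) s) (LAdd (LSmul c s) (LSmul d s))"
| smul_smul: "kc_eq n (LSmul c (LSmul d s)) (LSmul (c * d) s)"
| smul_one: "kc_eq n (LSmul 1 s) s"
| br_add: "kc_eq n (LBr (LAdd s t) u) (LAdd (LBr s u) (LBr t u))"
| br_smul: "kc_eq n (LBr (LSmul c s) t) (LSmul c (LBr s t))"
| br_alt: "kc_eq n (LBr s s) LZero"
| jacobi: "kc_eq n (LAdd (LBr s (LBr t u)) (LAdd (LBr t (LBr u s)) (LBr u (LBr s t)))) LZero"
| rel: "i < n \<Longrightarrow> j < n \<Longrightarrow> i \<noteq> j \<Longrightarrow>
     kc_eq n (LBr (LGen i) (LBr (LGen i) (LGen j))) (LSmul (-1) (LGen j))"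

definition so_mat :: "nat \<Rightarrow> real mat set" where
  "so_mat m = {A \<in> carrier_mat m m. transpose_mat A = - A}"

definition mat_comm :: "real mat \<Rightarrow> real mat \<Rightarrow> real mat" where
  "mat_comm A B = A * B - B * A"

text \<open>A map on representing terms inducing a Lie algebra homomorphism
  k_n = {wf terms}/kc_eq n  -->  so_m(R).\<close>
definition kc_hom_so :: "nat \<Rightarrow> nat \<Rightarrow> (lie_term \<Rightarrow> real mat) \<Rightarrow> bool" where
  "kc_hom_so n m f \<longleftrightarrow>
     (\<forall>t. kc_wf n t \<longrightarrow> f t \<in> so_mat m) \<and>
     (\<forall>s t. kc_wf n s \<longrightarrow> kc_wf n t \<longrightarrow> kc_eq n s t \<longrightarrow> f s = f t) \<and>
     f LZero = 0\<^sub>m m m \<and>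
     (\<forall>s t. kc_wf n s \<longrightarrow> kc_wf n t \<longrightarrow> f (LAdd s t) = f s + f t) \<and>
     (\<forall>c s. kc_wf n s \<longrightarrow> f (LSmul c s) = c \<cdot>\<^sub>m f s) \<and>
     (\<forall>s t. kc_wf n s \<longrightarrow> kc_wf n t \<longrightarrow> f (LBr s t) = mat_comm (f s) (f t))"

end

theory Submission imports Defs "HOL-Library.Product_Lexorder" begin

definition E :: "nat \<Rightarrow> nat \<Rightarrow> nat \<Rightarrow> real mat" where
  "E m a b = mat m m (\<lambda>(r,s). (if r = a \<and> s = b then 1 else 0) - (if r = b \<and> s = a then 1 else 0))"

lemma E_skew: "transpose_mat (E m a b) = - E m a b"
proof (rule eq_matI)
  fix i j assume "i < dim_row (- E m a b)" "j < dim_col (- E m a b)"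
  then have ij: "i < m" "j < m" by (simp_all add: E_def)
  have "transpose_mat (E m a b) $$ (i, j) = E m a b $$ (j,i)"
    using ij by (simp add: E_def)
  also have "\<dots> = (if j = a \<and> i = b then 1 else 0) - (if j = b \<and> i = a then 1 else 0)"
    using ij by (simp add: E_def)
  also have "\<dots> = - ((if i = a \<and> j = b then 1 else 0) - (if i = b \<and> j = a then 1 else 0))"
    by (cases "i = a"; cases "j = b"; cases "i = b"; cases "j = a") simp_all
  also have "\<dots> = (- E m a b) $$ (i, j)"
    using ij by (simp add: E_def)
  finally show "transpose_mat (E m a b) $$ (i, j) = (- E m a b) $$ (i, j)" .
qed (simp_all add: E_def)

lemma E_carrier[simp]: "E m a b \<in> carrier_mat m m" by (simp add: E_def)
lemma E_dim[simp]: "dim_row (E m a b) = m" "dim_col (E m a b) = m" by (simp_all add: E_def)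
lemma E_idx[simp]: "r < m \<Longrightarrow> s < m \<Longrightarrow> E m a b $$ (r,s) =
   (if r = a \<and> s = b then 1 else 0) - (if r = b \<and> s = a then 1 else 0)" by (simp add: E_def)

lemma EE_idx:
  assumes "a < m" "b < m" "c < m" "d < m" "r < m" "s < m" "a \<noteq> b" "c \<noteq> d"
  shows "(E m a b * E m c d) $$ (r,s) =
    (if r = a then (if b = c \<and> s = d then 1 else 0) - (if b = d \<and> s = c then 1 else 0) else 0)
  - (if r = b then (if a = c \<and> s = d then 1 else 0) - (if a = d \<and> s = c then 1 else 0) else 0)"
  (is "_ = ?rhs")
proof -
  have "(E m a b * E m c d) $$ (r,s) = (\<Sum>k\<in>{0..<m}. E m a b $$ (r,k) * E m c d $$ (k,s))"
    using assms by (simp add: scalar_prod_def del: E_idx)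
  also have "\<dots> = (\<Sum>k\<in>{0..<m}. ((if r = a \<and> k = b then 1 else 0) - (if r = b \<and> k = a then 1 else 0)) *
      ((if k = c \<and> s = d then 1 else 0) - (if k = d \<and> s = c then 1 else 0)))"
    using assms by (intro sum.cong) auto
  also have "\<dots> = (\<Sum>k\<in>{0..<m}. (if k = b then (if r = a then 1 else 0) * ((if b = c \<and> s = d then 1 else 0) - (if b = d \<and> s = c then 1 else 0)) else 0)
        - (if k = a then (if r = b then 1 else 0) * ((if a = c \<and> s = d then 1 else 0) - (if a = d \<and> s = c then 1 else 0)) else 0))"
    by (intro sum.cong) auto
  also have "\<dots> = ?rhs"
    using assms by (simp add: sum_subtractf)
  finally show ?thesis .
qed

lemma comm1:
  assumes "i < n" "j < n" "i \<noteq> j"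
  shows "mat_comm (E (Suc n) i n) (E (Suc n) j n) = E (Suc n) j i"
  unfolding mat_comm_def
  by (rule eq_matI) (use assms in \<open>auto simp del: index_mult_mat simp add: index_mult_mat(2,3) EE_idx\<close>)

lemma comm2:
  assumes "i < n" "j < n" "i \<noteq> j"
  shows "mat_comm (E (Suc n) i n) (E (Suc n) j i) = - E (Suc n) j n"
  unfolding mat_comm_def
  by (rule eq_matI) (use assms in \<open>auto simp del: index_mult_mat simp add: index_mult_mat(2,3) EE_idx\<close>)

fun kf :: "nat \<Rightarrow> lie_term \<Rightarrow> real mat" where
  "kf n (LGen i) = (if i < n then E (Suc n) i n else 0\<^sub>m (Suc n) (Suc n))"
| "kf n LZero = 0\<^sub>m (Suc n) (Suc n)"
| "kf n (LAdd s t) = kf n s + kf n t"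
| "kf n (LSmul c s) = c \<cdot>\<^sub>m kf n s"
| "kf n (LBr s t) = mat_comm (kf n s) (kf n t)"

lemma kf_carrier[simp]: "kf n t \<in> carrier_mat (Suc n) (Suc n)"
  by (induction t) (auto simp: mat_comm_def)

lemma kf_dim[simp]: "dim_row (kf n t) = Suc n" "dim_col (kf n t) = Suc n"
  using kf_carrier[of n t] by (auto simp del: kf_carrier)

lemma lin_br_add:
  fixes P Q R S :: "real mat"
  assumes "P \<in> carrier_mat m m" "Q \<in> carrier_mat m m" "R \<in> carrier_mat m m" "S \<in> carrier_mat m m"
  shows "P + Q - (R + S) = (P - R) + (Q - S)"
  by (rule eq_matI) (use assms in auto)

lemma lin_smul:
  fixes P Q :: "real mat"
  assumes "P \<in> carrier_mat m m" "Q \<in> carrier_mat m m"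
  shows "c \<cdot>\<^sub>m P - c \<cdot>\<^sub>m Q = c \<cdot>\<^sub>m (P - Q)"
  by (rule eq_matI) (use assms in \<open>auto simp: algebra_simps\<close>)

lemma lin_jac:
  fixes P1 P2 P3 P4 P5 P6 :: "real mat"
  assumes "P1 \<in> carrier_mat m m" "P2 \<in> carrier_mat m m" "P3 \<in> carrier_mat m m"
     "P4 \<in> carrier_mat m m" "P5 \<in> carrier_mat m m" "P6 \<in> carrier_mat m m"
  shows "P1 - P2 - (P3 - P4) + (P3 - P5 - (P6 - P2) + (P6 - P4 - (P1 - P5))) = 0\<^sub>m m m"
  by (rule eq_matI) (use assms in auto)

lemma comm_add:
  fixes A B C :: "real mat"
  assumes "A \<in> carrier_mat m m" "B \<in> carrier_mat m m" "C \<in> carrier_mat m m"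
  shows "mat_comm (A + B) C = mat_comm A C + mat_comm B C"
  unfolding mat_comm_def
  using assms by (simp add: add_mult_distrib_mat[where nr=m and n=m and nc=m] mult_add_distrib_mat[where nr=m and n=m and nc=m] lin_br_add[of _ m])

lemma comm_smul:
  fixes A B :: "real mat"
  assumes "A \<in> carrier_mat m m" "B \<in> carrier_mat m m"
  shows "mat_comm (c \<cdot>\<^sub>m A) B = c \<cdot>\<^sub>m mat_comm A B"
  unfolding mat_comm_def
  using assms by (simp add: mult_smult_assoc_mat[where nr=m and n=m and nc=m] mult_smult_distrib[where nr=m and n=m and nc=m] lin_smul[of _ m])

lemma comm_alt:
  fixes A :: "real mat"
  assumes "A \<in> carrier_mat m m"
  shows "mat_comm A A = 0\<^sub>m m m"
  unfolding mat_comm_def by (rule eq_matI) (use assms in auto)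

lemma comm_jac:
  fixes A B C :: "real mat"
  assumes A: "A \<in> carrier_mat m m" and B: "B \<in> carrier_mat m m" and C: "C \<in> carrier_mat m m"
  shows "mat_comm A (mat_comm B C) + (mat_comm B (mat_comm C A) + mat_comm C (mat_comm A B)) = 0\<^sub>m m m"
proof -
  have d: "\<And>X Y Z. X \<in> carrier_mat m m \<Longrightarrow> Y \<in> carrier_mat m m \<Longrightarrow> Z \<in> carrier_mat m m \<Longrightarrow>
     mat_comm X (mat_comm Y Z) = (X * (Y * Z) - X * (Z * Y)) - (Y * (Z * X) - Z * (Y * X))"
    unfolding mat_comm_def
    by (simp add: mult_minus_distrib_mat[where nr=m and n=m and nc=m] minus_mult_distrib_mat[where nr=m and n=m and nc=m])
  show ?thesis
    using A B C
    apply (simp add: d)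
    apply (rule lin_jac[of _ m]) 
    by auto
qed

lemma kf_eq: "kc_eq n s t \<Longrightarrow> kf n s = kf n t"
proof (induction rule: kc_eq.induct)
  case (add_inv s)
  show ?case by simp (rule eq_matI, auto)
next
  case (smul_add c s t)
  show ?case by simp (rule eq_matI, auto simp: algebra_simps)
next
  case (add_smul c d s)
  show ?case by simp (rule eq_matI, auto simp: algebra_simps)
next
  case (smul_smul c d s)
  show ?case by simp (rule eq_matI, auto simp: algebra_simps)
next
  case (smul_one s)
  show ?case by simp (rule eq_matI, auto simp: algebra_simps)
next
  case (br_add s t u)
  show ?case by (simp add: comm_add[of _ "Suc n"])
next
  case (br_smul c s t)
  show ?case by (simp add: comm_smul[of _ "Suc n"])
next
  case (br_alt s)
  show ?case by (simp add: comm_alt[of _ "Suc n"])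
next
  case (jacobi s t u)
  show ?case by (simp only: kf.simps) (rule comm_jac; simp)
next
  case (rel i j)
  show ?case using rel by (simp add: comm1 comm2) (rule eq_matI, auto)
qed (auto simp: comm_add_mat[of _ "Suc n" "Suc n"])




lemma zero_tr: "transpose_mat (0\<^sub>m m m :: real mat) = - 0\<^sub>m m m"
  by (rule eq_matI) auto

lemma zero_neg: "(0\<^sub>m m m :: real mat) = - 0\<^sub>m m m"
  by (rule eq_matI) auto

lemma tr_smult:
  assumes "transpose_mat B = - (B :: real mat)" "B \<in> carrier_mat m m"
  shows "transpose_mat (c \<cdot>\<^sub>m B) = - (c \<cdot>\<^sub>m B)"
proof (rule eq_matI)
  fix i j assume ij: "i < dim_row (- (c \<cdot>\<^sub>m B))" "j < dim_col (- (c \<cdot>\<^sub>m B))"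
  have "transpose_mat B $$ (i,j) = (- B) $$ (i,j)" using assms(1) by simp
  then show "transpose_mat (c \<cdot>\<^sub>m B) $$ (i, j) = (- (c \<cdot>\<^sub>m B)) $$ (i, j)"
    using ij assms(2) by auto
qed (use assms in auto)

lemma neg_sub:
  assumes "P \<in> carrier_mat m m" "Q \<in> carrier_mat m m"
  shows "Q - P = - (P - (Q :: real mat))"
  by (rule eq_matI) (use assms in auto)

lemma tr_comm:
  assumes "X \<in> carrier_mat m m" "Y \<in> carrier_mat m m" "transpose_mat X = - (X :: real mat)" "transpose_mat Y = - Y"
  shows "transpose_mat (X * Y - Y * X) = Y * X - X * Y"
proof -
  have "transpose_mat (X * Y - Y * X) = transpose_mat (X * Y) - transpose_mat (Y * X)"
    by (rule transpose_minus) (use assms in auto)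
  also have "\<dots> = transpose_mat Y * transpose_mat X - transpose_mat X * transpose_mat Y"
    using assms by (simp add: transpose_mult[of _ m m _ m])
  also have "\<dots> = Y * X - X * Y" using assms by simp
  finally show ?thesis .
qed

lemma kf_skew: "transpose_mat (kf n t) = - kf n t"
proof (induction t)
  case (LGen i) show ?case
    by (cases "i < n") (simp_all add: E_skew zero_tr, rule zero_neg)
next
  case LZero show ?case by simp (rule eq_matI, auto)
next
  case (LAdd s t) then show ?case
    by (simp add: transpose_add[where nr="Suc n" and nc="Suc n"]) (rule eq_matI, auto)
next
  case (LSmul c s) then show ?case
    by (simp add: tr_smult[where m="Suc n"])
next
  case (LBr s t)
  have "transpose_mat (kf n (LBr s t)) = kf n t * kf n s - kf n s * kf n t"
    unfolding kf.simps mat_comm_def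
    by (rule tr_comm[of _ "Suc n"]) (use LBr in auto)
  also have "\<dots> = - kf n (LBr s t)"
    unfolding kf.simps mat_comm_def by (rule neg_sub[of _ "Suc n"]) auto
  finally show ?case .
qed

definition gterm :: "nat \<Rightarrow> nat \<times> nat \<Rightarrow> lie_term" where
  "gterm n x = (if snd x = n then LGen (fst x) else LBr (LGen (snd x)) (LGen (fst x)))"

lemma gterm_val: "p < q \<Longrightarrow> q \<le> n \<Longrightarrow> kf n (gterm n (p,q)) = E (Suc n) p q"
  by (auto simp: gterm_def comm1)

lemma gterm_wf: "p < q \<Longrightarrow> q \<le> n \<Longrightarrow> kc_wf n (gterm n (p,q))"
  by (auto simp: gterm_def)

fun tsum :: "nat \<Rightarrow> (nat \<times> nat \<Rightarrow> real) \<Rightarrow> (nat \<times> nat) list \<Rightarrow> lie_term" where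
  "tsum n c [] = LZero"
| "tsum n c (x # xs) = LAdd (LSmul (c x) (gterm n x)) (tsum n c xs)"

lemma tsum_idx: "r < Suc n \<Longrightarrow> s < Suc n \<Longrightarrow>
  kf n (tsum n c xs) $$ (r,s) = (\<Sum>x\<leftarrow>xs. c x * kf n (gterm n x) $$ (r,s))"
  by (induction xs) auto

lemma tsum_wf: "\<forall>x\<in>set xs. fst x < snd x \<and> snd x \<le> n \<Longrightarrow> kc_wf n (tsum n c xs)"
  by (induction xs) (auto intro: gterm_wf)

lemma surj_so:
  assumes A: "A \<in> so_mat (Suc n)"
  shows "A \<in> kf n ` {t. kc_wf n t}"
proof -
  define P where "P = {(p,q). p < q \<and> q < Suc n}"
  have finP: "finite P" unfolding P_def
    by (rule finite_subset[of _ "{..<Suc n} \<times> {..<Suc n}"]) auto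
  define xs where "xs = sorted_list_of_set P"
  have setxs: "set xs = P" and dxs: "distinct xs" using finP by (auto simp: xs_def)
  define c where "c = (\<lambda>x. A $$ x)"
  have Ac: "A \<in> carrier_mat (Suc n) (Suc n)" and At: "transpose_mat A = - A"
    using A by (auto simp: so_mat_def)
  have sk: "A $$ (s,r) = - A $$ (r,s)" if "r < Suc n" "s < Suc n" for r s
  proof -
    have "transpose_mat A $$ (r,s) = (- A) $$ (r,s)" using At by simp
    then show ?thesis using that Ac by auto
  qed
  have "kf n (tsum n c xs) = A"
  proof (rule eq_matI)
    fix r s assume r: "r < dim_row A" and s: "s < dim_col A"
    then have r': "r < Suc n" and s': "s < Suc n" using Ac by auto
    have "kf n (tsum n c xs) $$ (r,s) = (\<Sum>x\<in>P. c x * kf n (gterm n x) $$ (r,s))"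
      using r' s' dxs setxs by (simp add: tsum_idx sum_list_distinct_conv_sum_set)
    also have "\<dots> = (\<Sum>x\<in>P. (if x = (r,s) then c x else 0) - (if x = (s,r) then c x else 0))"
    proof (rule sum.cong[OF HOL.refl])
      fix x assume "x \<in> P"
      then obtain p q where x: "x = (p,q)" "p < q" "q < Suc n" by (auto simp: P_def)
      show "c x * kf n (gterm n x) $$ (r,s) = (if x = (r,s) then c x else 0) - (if x = (s,r) then c x else 0)"
        using x r' s' by (simp add: gterm_val)
    qed
    also have "\<dots> = (if (r,s) \<in> P then c (r,s) else 0) - (if (s,r) \<in> P then c (s,r) else 0)"
      using finP by (simp add: sum_subtractf)
    also have "\<dots> = A $$ (r,s)"
    proof -
      consider "r < s" | "s < r" | "r = s" by linarith
      then show ?thesis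
      proof cases
        case 1 then show ?thesis using s' by (simp add: P_def c_def)
      next
        case 2 then show ?thesis using r' sk[OF r' s'] by (simp add: P_def c_def)
      next
        case 3 then show ?thesis using sk[OF r' r'] by (simp add: P_def c_def)
      qed
    qed
    finally show "kf n (tsum n c xs) $$ (r,s) = A $$ (r,s)" .
  qed (use Ac in auto)
  moreover have "kc_wf n (tsum n c xs)"
    by (rule tsum_wf) (auto simp: setxs P_def)
  ultimately show ?thesis by blast
qed

theorem mainTheorem12:
  fixes n :: nat
  assumes "n \<ge> 2"
  shows "\<exists>f. kc_hom_so n (n + 1) f \<and> so_mat (n + 1) \<subseteq> f ` {t. kc_wf n t}"
proof (intro exI conjI)
  show "kc_hom_so n (n + 1) (kf n)"
    unfolding kc_hom_so_def so_mat_def using kf_eq kf_skew by auto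
  show "so_mat (n + 1) \<subseteq> kf n ` {t. kc_wf n t}"
    using surj_so by auto
qed

end
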